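(* Let $G$ be a connected planar graph, $R\ge1$ an integer and $\epsilon\in(0,1]$. There is an absolute constant $K$ such that for every pair $u,v$ of vertices, Algorithm TC with parameters $R,\epsilon$ separates $u$ and $v$ with probability at most $K\,d(u,v)/R$.
   Context: Let $G=(V,E)$ be a connected unweighted planar graph and $d(\cdot,\cdot)$ its shortest-path distance. Two vertices are separated if they lie in different output clusters. Algorithm TC with integer parameter $R\ge 1$ and $\epsilon\in(0,1]$: Phase 0: set $F=\emptyset$; choose an arbitrary root $r_0$, let the level of $x$ be its distance from $r_0$ in $G$, sample $k$ uniformly from $\{0,\dots,R-1\}$, and add to $F$ every edge joining a vertex at level $\ell$ to one at level $\ell+1$ with $\ell\equiv k\pmod R$. Then for phases $i=1,2$: for each connected component $C$ of $(V,E\setminus F)$ (components as at the start of the phase), choose as root $r_i$ the vertex of $C$ closest to the root $r_{i-1}$ used in the previous phase for the component from which $C$ arose (ties broken arbitrarily), let levels be distances from $r_i$ within $C$, sample $k_1$ uniformly from $\{0,\dots,R-1\}$, sample $\kappa\in(0,R]$ from the density $\epsilon\,\kappa^{\epsilon-1}/R^{\epsilon}$ and set $k_2=\lceil\kappa\rceil$, and add to $F$ every edge of $C$ joining a vertex at level $\ell$ to a vertex at level $\ell+1$ with $\ell\equiv k_1\pmod R$ or $\ell\equiv k_1+k_2\pmod R$. All samples are independent. Output the connected components of $(V,E\setminus F)$ as clusters. *)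

theory Defs
  imports "HOL-Analysis.Analysis" "HOL-Probability.Probability"
begin

definition simple_graph :: "nat set \<Rightarrow> nat set set \<Rightarrow> bool" where
  "simple_graph V E \<longleftrightarrow> finite V \<and> (\<forall>e\<in>E. e \<subseteq> V \<and> card e = 2)"

definition adjrel :: "nat set set \<Rightarrow> (nat \<times> nat) set" where
  "adjrel E' = {(x, y). {x, y} \<in> E'}"

definition reach :: "nat set set \<Rightarrow> nat \<Rightarrow> nat \<Rightarrow> bool" where
  "reach E' x y \<longleftrightarrow> (x, y) \<in> (adjrel E')\<^sup>*"

definition gdist :: "nat set set \<Rightarrow> nat \<Rightarrow> nat \<Rightarrow> nat" where
  "gdist E' x y = (LEAST n. (x, y) \<in> adjrel E' ^^ n)"

definition connected_graph :: "nat set \<Rightarrow> nat set set \<Rightarrow> bool" where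
  "connected_graph V E \<longleftrightarrow> (\<forall>x\<in>V. \<forall>y\<in>V. reach E x y)"

definition comp :: "nat set \<Rightarrow> nat set set \<Rightarrow> nat \<Rightarrow> nat set" where
  "comp V E' x = {y \<in> V. reach E' x y}"

definition comps :: "nat set \<Rightarrow> nat set set \<Rightarrow> nat set set" where
  "comps V E' = comp V E' ` V"

definition planar :: "nat set \<Rightarrow> nat set set \<Rightarrow> bool" where
  "planar V E \<longleftrightarrow>
     (\<exists>(f :: nat \<Rightarrow> complex) (\<gamma> :: nat set \<Rightarrow> real \<Rightarrow> complex).
        inj_on f V \<and>
        (\<forall>e\<in>E. arc (\<gamma> e) \<and> {pathstart (\<gamma> e), pathfinish (\<gamma> e)} = f ` e) \<and>
        (\<forall>e\<in>E. \<forall>e'\<in>E. e \<noteq> e' \<longrightarrow> path_image (\<gamma> e) \<inter> path_image (\<gamma> e') \<subseteq> f ` (e \<inter> e')) \<and>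
        (\<forall>e\<in>E. \<forall>x\<in>V. f x \<in> path_image (\<gamma> e) \<longrightarrow> x \<in> e))"

text \<open>Edges of E' joining level l to level l+1 (levels = distances from r using E', i.e. within
  the component of r), where l mod R lies in ks.\<close>
definition level_cuts :: "nat \<Rightarrow> nat set set \<Rightarrow> nat \<Rightarrow> nat set \<Rightarrow> nat set set" where
  "level_cuts R E' r ks =
     {e \<in> E'. \<exists>x y. e = {x, y} \<and> reach E' r x \<and>
                    gdist E' r y = gdist E' r x + 1 \<and> gdist E' r x mod R \<in> ks}"

definition kappa_measure :: "nat \<Rightarrow> real \<Rightarrow> real measure" where
  "kappa_measure R \<epsilon> = density lborel
     (\<lambda>\<kappa>. ennreal (indicator {0<..real R} \<kappa> * \<epsilon> * \<kappa> powr (\<epsilon> - 1) / real R powr \<epsilon>))"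

definition k2_pmf :: "nat \<Rightarrow> real \<Rightarrow> nat pmf" where
  "k2_pmf R \<epsilon> = embed_pmf (\<lambda>j. measure (kappa_measure R \<epsilon>) {\<kappa>. nat \<lceil>\<kappa>\<rceil> = j})"

text \<open>State after a phase: (F, lvl), where lvl x is the level of x in that phase (distance from
  the root of x's component, within that component).\<close>
definition phase0 :: "nat \<Rightarrow> nat set set \<Rightarrow> nat \<Rightarrow> (nat set set \<times> (nat \<Rightarrow> nat)) pmf" where
  "phase0 R E r0 = map_pmf (\<lambda>k. (level_cuts R E r0 {k}, gdist E r0)) (pmf_of_set {0..<R})"

text \<open>tb i C lvl: the root chosen for component C in phase i, given previous-phase levels
  (the tie-breaking rule).\<close>
definition valid_tiebreak :: "(nat \<Rightarrow> nat set \<Rightarrow> (nat \<Rightarrow> nat) \<Rightarrow> nat) \<Rightarrow> bool" where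
  "valid_tiebreak tb \<longleftrightarrow>
     (\<forall>i C lv. C \<noteq> {} \<and> finite C \<longrightarrow> tb i C lv \<in> C \<and> (\<forall>y\<in>C. lv (tb i C lv) \<le> lv y))"

definition phase_step ::
  "nat \<Rightarrow> real \<Rightarrow> (nat \<Rightarrow> nat set \<Rightarrow> (nat \<Rightarrow> nat) \<Rightarrow> nat) \<Rightarrow> nat \<Rightarrow> nat set \<Rightarrow> nat set set
   \<Rightarrow> nat set set \<times> (nat \<Rightarrow> nat) \<Rightarrow> (nat set set \<times> (nat \<Rightarrow> nat)) pmf" where
  "phase_step R \<epsilon> tb i V E st =
     (let F = fst st; lvl = snd st; E' = E - F; Cs = comps V E';
          root = (\<lambda>C. tb i C lvl)
      in map_pmf
           (\<lambda>\<sigma>. (F \<union> (\<Union>C\<in>Cs. level_cuts R E' (root C)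
                              {fst (\<sigma> C), (fst (\<sigma> C) + snd (\<sigma> C)) mod R}),
                 (\<lambda>x. gdist E' (root (comp V E' x)) x)))
           (Pi_pmf Cs (0, 0) (\<lambda>C. pair_pmf (pmf_of_set {0..<R}) (k2_pmf R \<epsilon>))))"

definition TC ::
  "nat \<Rightarrow> real \<Rightarrow> (nat \<Rightarrow> nat set \<Rightarrow> (nat \<Rightarrow> nat) \<Rightarrow> nat) \<Rightarrow> nat set \<Rightarrow> nat set set \<Rightarrow> nat
   \<Rightarrow> nat set set pmf" where
  "TC R \<epsilon> tb V E r0 =
     map_pmf fst
       (bind_pmf (phase0 R E r0) (\<lambda>s0.
          bind_pmf (phase_step R \<epsilon> tb 1 V E s0) (\<lambda>s1.
            phase_step R \<epsilon> tb 2 V E s1)))"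

definition separated :: "nat set set \<Rightarrow> nat set set \<Rightarrow> nat \<Rightarrow> nat \<Rightarrow> bool" where
  "separated E F u v \<longleftrightarrow> \<not> reach (E - F) u v"

end

theory Submission
  imports Defs
begin

lemma bind_pmf_prob_le:
  fixes p :: "'a pmf" and f :: "'a \<Rightarrow> 'b pmf"
  assumes c: "0 \<le> c"
  and h: "\<And>x. x \<in> set_pmf p \<Longrightarrow> x \<notin> B \<Longrightarrow> measure_pmf.prob (f x) A \<le> c"
  shows "measure_pmf.prob (bind_pmf p f) A \<le> measure_pmf.prob p B + c"
proof -
  have "emeasure (measure_pmf (bind_pmf p f)) A = (\<integral>\<^sup>+x. emeasure (f x) A \<partial>p)" by simp
  also have "\<dots> \<le> (\<integral>\<^sup>+x. (indicator B x + ennreal c) \<partial>p)"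
  proof (rule nn_integral_mono_AE, rule AE_pmfI)
    fix x assume x: "x \<in> set_pmf p"
    show "emeasure (f x) A \<le> indicator B x + ennreal c"
    proof (cases "x \<in> B")
      case True
      have "emeasure (f x) A \<le> 1" by (simp add: measure_pmf.emeasure_le_1)
      thus ?thesis using True by (simp add: add_increasing2)
    next
      case False
      have "emeasure (f x) A = ennreal (measure_pmf.prob (f x) A)"
        by (simp add: measure_pmf.emeasure_eq_measure)
      also have "\<dots> \<le> ennreal c" using h[OF x False] by (simp add: ennreal_leI)
      finally show ?thesis using False by simp
    qed
  qed
  also have "\<dots> = emeasure p B + ennreal c"
    by (simp add: nn_integral_add measure_pmf.emeasure_space_1)
  also have "\<dots> = ennreal (measure_pmf.prob p B + c)"
    by (simp add: measure_pmf.emeasure_eq_measure c ennreal_plus)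
  finally have "ennreal (measure_pmf.prob (bind_pmf p f) A) \<le> ennreal (measure_pmf.prob p B + c)"
    by (simp only: measure_pmf.emeasure_eq_measure)
  moreover have "0 \<le> measure_pmf.prob p B + c" using c by simp
  ultimately show ?thesis using ennreal_le_iff by blast
qed


lemma adjrel_sym: "(x, y) \<in> adjrel E \<Longrightarrow> (y, x) \<in> adjrel E"
  by (simp add: adjrel_def insert_commute)

lemma reach_refl: "reach E x x" by (simp add: reach_def)

lemma reach_trans: "reach E x y \<Longrightarrow> reach E y z \<Longrightarrow> reach E x z"
  unfolding reach_def by (rule rtrancl_trans)

lemma reach_sym: "reach E x y \<Longrightarrow> reach E y x"
  unfolding reach_def
proof (induction rule: rtrancl_induct)
  case base then show ?case by simp
next
  case (step y z)
  then show ?case using adjrel_sym by (meson converse_rtrancl_into_rtrancl)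
qed

lemma reach_edge: "{x, y} \<in> E \<Longrightarrow> reach E x y"
  unfolding reach_def adjrel_def by auto

lemma lc_level:
  assumes "e \<in> level_cuts R E' r ks1"
  shows "\<exists>l. l \<in> ks1 \<and> (\<forall>ks. e \<in> level_cuts R E' r ks \<longrightarrow> l \<in> ks)"
proof -
  from assms obtain x1 y1 where e1: "e = {x1, y1}" "gdist E' r y1 = gdist E' r x1 + 1"
      "gdist E' r x1 mod R \<in> ks1"
    unfolding level_cuts_def by blast
  have "\<forall>ks. e \<in> level_cuts R E' r ks \<longrightarrow> gdist E' r x1 mod R \<in> ks"
  proof (intro allI impI)
    fix ks assume "e \<in> level_cuts R E' r ks"
    then obtain x2 y2 where e2: "e = {x2, y2}" "gdist E' r y2 = gdist E' r x2 + 1"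
      "gdist E' r x2 mod R \<in> ks"
      unfolding level_cuts_def by blast
    from e1(1) e2(1) have "(x1 = x2 \<and> y1 = y2) \<or> (x1 = y2 \<and> y1 = x2)"
      by (simp add: doubleton_eq_iff) blast
    then have "x1 = x2" using e1(2) e2(2) by auto
    then show "gdist E' r x1 mod R \<in> ks" using e2(3) by simp
  qed
  then show ?thesis using e1(3) by blast
qed

lemma lc_reach:
  assumes "e \<in> level_cuts R E' r ks" "a \<in> e"
  shows "reach E' r a" "e \<in> E'"
proof -
  from assms(1) obtain x y where e: "e \<in> E'" "e = {x, y}" "reach E' r x"
    unfolding level_cuts_def by blast
  show "e \<in> E'" by (rule e(1))
  have "reach E' x y" using e reach_edge by blast
  then show "reach E' r a" using assms(2) e reach_trans by auto
qed

lemma comp_eq: "reach E' z z0 \<Longrightarrow> comp V E' z = comp V E' z0"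
  unfolding comp_def using reach_trans reach_sym by blast

lemma path_lemma:
  "(u, v) \<in> adjrel E ^^ n \<Longrightarrow>
   \<exists>P. finite P \<and> P \<subseteq> E \<and> card P \<le> n \<and> (\<forall>F. P \<inter> F = {} \<longrightarrow> reach (E - F) u v)"
proof (induction n arbitrary: v)
  case 0
  then show ?case by (intro exI[of _ "{}"]) (auto simp: reach_refl)
next
  case (Suc n)
  then obtain y where y: "(u, y) \<in> adjrel E ^^ n" "(y, v) \<in> adjrel E"
    by (meson relpow_Suc_E)
  from Suc.IH[OF y(1)] obtain P where P: "finite P" "P \<subseteq> E" "card P \<le> n"
    "\<forall>F. P \<inter> F = {} \<longrightarrow> reach (E - F) u y" by blast
  have yv: "{y, v} \<in> E" using y(2) by (simp add: adjrel_def)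
  show ?case
  proof (intro exI[of _ "insert {y, v} P"] conjI allI impI)
    show "finite (insert {y, v} P)" using P by simp
    show "insert {y, v} P \<subseteq> E" using P yv by simp
    show "card (insert {y, v} P) \<le> Suc n" using P card_insert_le_m1
      by (simp add: card_insert_if)
    fix F assume F: "insert {y, v} P \<inter> F = {}"
    then have "reach (E - F) u y" using P(4) by blast
    moreover have "reach (E - F) y v" using F yv by (intro reach_edge) auto
    ultimately show "reach (E - F) u v" by (rule reach_trans)
  qed
qed


lemma mod_shift_inj: "(x::nat) < R \<Longrightarrow> y < R \<Longrightarrow> (x + b) mod R = (y + b) mod R \<Longrightarrow> x = y"
proof (induction x y rule: linorder_wlog)
  case (le x y)
  then have "R dvd (y + b) - (x + b)" using mod_eq_dvd_iff_nat[of "x+b" "y+b" R] by simp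
  then have "R dvd y - x" by simp
  moreover have "y - x < R" using le by simp
  ultimately have "y - x = 0" using dvd_imp_le by (metis gr0I leD)
  then show ?case using le by simp
next
  case (sym a b) then show ?case by metis
qed

lemma card_mod_shift:
  assumes "R \<ge> (1::nat)"
  shows "card ({0..<R} \<inter> {x. l = x \<or> l = (x + b) mod R}) \<le> 2"
proof -
  have sub: "{0..<R} \<inter> {x. l = x \<or> l = (x + b) mod R} \<subseteq> {l} \<union> {x\<in>{0..<R}. (x + b) mod R = l}"
    by auto
  have "card {x\<in>{0..<R}. (x + b) mod R = l} \<le> Suc 0"
  proof (subst card_le_Suc0_iff_eq, simp, intro ballI)
    fix x y assume "x \<in> {x\<in>{0..<R}. (x + b) mod R = l}" "y \<in> {x\<in>{0..<R}. (x + b) mod R = l}"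
    then have xy: "x < R" "y < R" "(x + b) mod R = (y + b) mod R" by auto
    then show "x = y" using mod_shift_inj by blast
  qed
  then have "card ({l} \<union> {x\<in>{0..<R}. (x + b) mod R = l}) \<le> 2"
    using card_Un_le[of "{l}" "{x\<in>{0..<R}. (x + b) mod R = l}"] by simp
  moreover have "card ({0..<R} \<inter> {x. l = x \<or> l = (x + b) mod R}) \<le> card ({l} \<union> {x\<in>{0..<R}. (x + b) mod R = l})"
    by (rule card_mono[OF _ sub]) simp
  ultimately show ?thesis by linarith
qed

lemma pair_bound:
  assumes R: "R \<ge> (1::nat)"
  shows "measure_pmf.prob (pair_pmf (pmf_of_set {0..<R}) q) {ab. l = fst ab \<or> l = (fst ab + snd ab) mod R}
          \<le> 2 / real R"
proof -
  have eq: "pair_pmf (pmf_of_set {0..<R}) q = bind_pmf q (\<lambda>b. map_pmf (\<lambda>a. (a, b)) (pmf_of_set {0..<R}))"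
    unfolding pair_pmf_def map_pmf_def by (rule bind_commute_pmf)
  have "measure_pmf.prob (bind_pmf q (\<lambda>b. map_pmf (\<lambda>a. (a, b)) (pmf_of_set {0..<R})))
          {ab. l = fst ab \<or> l = (fst ab + snd ab) mod R} \<le> measure_pmf.prob q {} + 2 / real R"
  proof (rule bind_pmf_prob_le)
    fix b
    have ne: "{0..<R} \<noteq> {}" using R by auto
    have "measure_pmf.prob (map_pmf (\<lambda>a. (a, b)) (pmf_of_set {0..<R})) {ab. l = fst ab \<or> l = (fst ab + snd ab) mod R}
        = real (card ({0..<R} \<inter> {x. l = x \<or> l = (x + b) mod R})) / real R"
      using ne by (simp add: measure_pmf_of_set vimage_def)
    also have "\<dots> \<le> 2 / real R"
      using card_mod_shift[OF R, of l b] R by (simp add: divide_right_mono)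
    finally show "measure_pmf.prob (map_pmf (\<lambda>a. (a, b)) (pmf_of_set {0..<R})) {ab. l = fst ab \<or> l = (fst ab + snd ab) mod R} \<le> 2 / real R" .
  qed simp
  then show ?thesis using eq by simp
qed

lemma phase0_bound:
  assumes R: "R \<ge> (1::nat)"
  shows "measure_pmf.prob (phase0 R E r0) {s. e \<in> fst s} \<le> 1 / real R"
proof -
  have ne: "{0..<R} \<noteq> {}" using R by auto
  have "measure_pmf.prob (phase0 R E r0) {s. e \<in> fst s}
      = real (card ({0..<R} \<inter> {k. e \<in> level_cuts R E r0 {k}})) / real R"
    unfolding phase0_def using ne by (simp add: measure_pmf_of_set vimage_def)
  also have "\<dots> \<le> 1 / real R"
  proof -
    have "card ({0..<R} \<inter> {k. e \<in> level_cuts R E r0 {k}}) \<le> 1"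
    proof (subst card_le_Suc0_iff_eq[simplified One_nat_def[symmetric]], simp, intro ballI)
      fix a b assume "a \<in> {0..<R} \<inter> {k. e \<in> level_cuts R E r0 {k}}" "b \<in> {0..<R} \<inter> {k. e \<in> level_cuts R E r0 {k}}"
      then have a: "e \<in> level_cuts R E r0 {a}" and b: "e \<in> level_cuts R E r0 {b}" by auto
      from lc_level[OF a] obtain l where "l \<in> {a}" "\<forall>ks. e \<in> level_cuts R E r0 ks \<longrightarrow> l \<in> ks" by blast
      then show "a = b" using b by auto
    qed
    then show ?thesis using R by (simp add: divide_right_mono)
  qed
  finally show ?thesis .
qed


lemma step_bound:
  assumes R: "R \<ge> (1::nat)" and V: "finite V" and tb: "valid_tiebreak tb"
    and eF: "e \<notin> fst st"
  shows "measure_pmf.prob (phase_step R \<epsilon> tb i V E st) {s. e \<in> fst s} \<le> 2 / real R"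
proof -
  define F where "F = fst st"
  define lvl where "lvl = snd st"
  define E' where "E' = E - F"
  define Cs where "Cs = comps V E'"
  define root where "root = (\<lambda>C. tb i C lvl)"
  define Q where "Q = Pi_pmf Cs (0, 0) (\<lambda>C. pair_pmf (pmf_of_set {0..<R}) (k2_pmf R \<epsilon>))"
  define g where "g = (\<lambda>\<sigma>::nat set \<Rightarrow> nat \<times> nat. (F \<union> (\<Union>C\<in>Cs. level_cuts R E' (root C)
                              {fst (\<sigma> C), (fst (\<sigma> C) + snd (\<sigma> C)) mod R}),
                 (\<lambda>x. gdist E' (root (comp V E' x)) x)))"
  have ps: "phase_step R \<epsilon> tb i V E st = map_pmf g Q"
    unfolding phase_step_def Let_def g_def Q_def root_def Cs_def E'_def lvl_def F_def by simp
  have finCs: "finite Cs" unfolding Cs_def comps_def using V by simp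
  have rootC: "root C \<in> C" if "C \<in> Cs" for C
  proof -
    from that obtain z where z: "z \<in> V" "C = comp V E' z" unfolding Cs_def comps_def by blast
    have "z \<in> C" using z by (simp add: comp_def reach_refl)
    moreover have "finite C" using z V by (simp add: comp_def)
    ultimately show ?thesis using tb unfolding valid_tiebreak_def root_def by blast
  qed
  have Ccomp: "C = comp V E' (root C)" if "C \<in> Cs" for C
  proof -
    from that obtain z where z: "z \<in> V" "C = comp V E' z" unfolding Cs_def comps_def by blast
    have "reach E' z (root C)" using rootC[OF that] z by (simp add: comp_def)
    then show ?thesis using z comp_eq by blast
  qed
  have pre: "g -` {s. e \<in> fst s} = {\<sigma>. \<exists>C\<in>Cs. e \<in> level_cuts R E' (root C) {fst (\<sigma> C), (fst (\<sigma> C) + snd (\<sigma> C)) mod R}}"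
    using eF unfolding g_def F_def by auto
  show ?thesis
  proof (cases "\<exists>C0\<in>Cs. \<exists>ks0. e \<in> level_cuts R E' (root C0) ks0")
    case False
    then have "g -` {s. e \<in> fst s} = {}" using pre by blast
    then show ?thesis using ps R by simp
  next
    case True
    then obtain C0 ks0 where C0: "C0 \<in> Cs" "e \<in> level_cuts R E' (root C0) ks0" by blast
    from lc_level[OF C0(2)] obtain l where l: "\<forall>ks. e \<in> level_cuts R E' (root C0) ks \<longrightarrow> l \<in> ks"
      by blast
    have uniq: "C = C0" if C: "C \<in> Cs" "e \<in> level_cuts R E' (root C) ks" for C ks
    proof -
      from C0(2) obtain x y where xy: "e = {x, y}" unfolding level_cuts_def by blast
      have "reach E' (root C) x" using lc_reach(1)[OF C(2)] xy by simp
      moreover have "reach E' (root C0) x" using lc_reach(1)[OF C0(2)] xy by simp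
      ultimately have "reach E' (root C) (root C0)" using reach_sym reach_trans by blast
      then show ?thesis using Ccomp[OF C(1)] Ccomp[OF C0(1)] comp_eq by metis
    qed
    have "g -` {s. e \<in> fst s} \<subseteq> (\<lambda>\<sigma>. \<sigma> C0) -` {ab. l = fst ab \<or> l = (fst ab + snd ab) mod R}"
    proof
      fix \<sigma> assume "\<sigma> \<in> g -` {s. e \<in> fst s}"
      then obtain C where C: "C \<in> Cs" "e \<in> level_cuts R E' (root C) {fst (\<sigma> C), (fst (\<sigma> C) + snd (\<sigma> C)) mod R}"
        using pre by blast
      then have "C = C0" using uniq by blast
      then show "\<sigma> \<in> (\<lambda>\<sigma>. \<sigma> C0) -` {ab. l = fst ab \<or> l = (fst ab + snd ab) mod R}"
        using C l by auto
    qed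
    then have "measure_pmf.prob Q (g -` {s. e \<in> fst s})
       \<le> measure_pmf.prob Q ((\<lambda>\<sigma>. \<sigma> C0) -` {ab. l = fst ab \<or> l = (fst ab + snd ab) mod R})"
      by (intro measure_pmf.finite_measure_mono) auto
    also have "\<dots> = measure_pmf.prob (map_pmf (\<lambda>\<sigma>. \<sigma> C0) Q) {ab. l = fst ab \<or> l = (fst ab + snd ab) mod R}"
      by simp
    also have "map_pmf (\<lambda>\<sigma>. \<sigma> C0) Q = pair_pmf (pmf_of_set {0..<R}) (k2_pmf R \<epsilon>)"
      unfolding Q_def by (subst Pi_pmf_component[OF finCs]) (simp add: C0(1))
    also have "measure_pmf.prob (pair_pmf (pmf_of_set {0..<R}) (k2_pmf R \<epsilon>)) {ab. l = fst ab \<or> l = (fst ab + snd ab) mod R}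
        \<le> 2 / real R" by (rule pair_bound[OF R])
    finally show ?thesis using ps by simp
  qed
qed


lemma TC_edge_bound:
  fixes R :: nat
  assumes R: "R \<ge> 1" and V: "finite V" and tb: "valid_tiebreak tb"
  shows "measure_pmf.prob (TC R \<epsilon> tb V E r0) {F. e \<in> F} \<le> 5 / real R"
proof -
  let ?B = "{s::nat set set \<times> (nat \<Rightarrow> nat). e \<in> fst s}"
  have eq: "TC R \<epsilon> tb V E r0 = map_pmf fst (bind_pmf (bind_pmf (phase0 R E r0) (phase_step R \<epsilon> tb 1 V E)) (phase_step R \<epsilon> tb 2 V E))"
    unfolding TC_def by (simp add: bind_assoc_pmf)
  have c: "0 \<le> 2 / real R" by simp
  have "measure_pmf.prob (bind_pmf (bind_pmf (phase0 R E r0) (phase_step R \<epsilon> tb 1 V E)) (phase_step R \<epsilon> tb 2 V E)) ?B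
      \<le> measure_pmf.prob (bind_pmf (phase0 R E r0) (phase_step R \<epsilon> tb 1 V E)) ?B + 2 / real R"
    by (rule bind_pmf_prob_le[OF c]) (intro step_bound[OF R V tb], simp)
  also have "measure_pmf.prob (bind_pmf (phase0 R E r0) (phase_step R \<epsilon> tb 1 V E)) ?B
      \<le> measure_pmf.prob (phase0 R E r0) ?B + 2 / real R"
    by (rule bind_pmf_prob_le[OF c]) (intro step_bound[OF R V tb], simp)
  also have "measure_pmf.prob (phase0 R E r0) ?B \<le> 1 / real R" by (rule phase0_bound[OF R])
  finally have "measure_pmf.prob (bind_pmf (bind_pmf (phase0 R E r0) (phase_step R \<epsilon> tb 1 V E)) (phase_step R \<epsilon> tb 2 V E)) ?B
      \<le> 5 / real R" by (simp add: field_simps)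
  then show ?thesis unfolding eq by (simp add: vimage_def)
qed

theorem lemma2:
  shows "\<exists>K::real. \<forall>(V::nat set) (E::nat set set) (R::nat) (\<epsilon>::real) (r0::nat) tb (u::nat) (v::nat).
    simple_graph V E \<and> connected_graph V E \<and> planar V E \<and>
    R \<ge> 1 \<and> 0 < \<epsilon> \<and> \<epsilon> \<le> 1 \<and> r0 \<in> V \<and> valid_tiebreak tb \<and> u \<in> V \<and> v \<in> V \<longrightarrow>
    measure_pmf.prob (TC R \<epsilon> tb V E r0) {F. separated E F u v}
      \<le> K * real (gdist E u v) / real R"
proof (intro exI[of _ 5] allI impI)
  fix V :: "nat set" and E :: "nat set set" and R :: nat and \<epsilon> :: real and r0 :: nat and tb and u v :: nat
  assume H: "simple_graph V E \<and> connected_graph V E \<and> planar V E \<and>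
    R \<ge> 1 \<and> 0 < \<epsilon> \<and> \<epsilon> \<le> (1::real) \<and> r0 \<in> V \<and> valid_tiebreak tb \<and> u \<in> V \<and> v \<in> V"
  then have R: "R \<ge> (1::nat)" and V: "finite V" and tb: "valid_tiebreak tb"
    by (auto simp: simple_graph_def)
  have "reach E u v" using H unfolding connected_graph_def by blast
  then have "\<exists>n. (u, v) \<in> adjrel E ^^ n" unfolding reach_def by (simp add: rtrancl_power)
  then have "(u, v) \<in> adjrel E ^^ gdist E u v" unfolding gdist_def by (rule LeastI_ex)
  from path_lemma[OF this] obtain P where P: "finite P" "card P \<le> gdist E u v"
    "\<forall>F. P \<inter> F = {} \<longrightarrow> reach (E - F) u v" by blast
  have sub: "{F. separated E F u v} \<subseteq> (\<Union>e\<in>P. {F. e \<in> F})"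
    using P(3) unfolding separated_def by blast
  have "measure_pmf.prob (TC R \<epsilon> tb V E r0) {F. separated E F u v}
      \<le> measure_pmf.prob (TC R \<epsilon> tb V E r0) (\<Union>e\<in>P. {F. e \<in> F})"
    using sub by (intro measure_pmf.finite_measure_mono) auto
  also have "\<dots> \<le> (\<Sum>e\<in>P. measure_pmf.prob (TC R \<epsilon> tb V E r0) {F. e \<in> F})"
    using P(1) by (intro measure_pmf.finite_measure_subadditive_finite) auto
  also have "\<dots> \<le> (\<Sum>e\<in>P. 5 / real R)"
    by (intro sum_mono TC_edge_bound[OF R V tb])
  also have "\<dots> = real (card P) * 5 / real R" by simp
  also have "\<dots> \<le> 5 * real (gdist E u v) / real R"
    using P(2) R by (simp add: divide_right_mono)
  finally show "measure_pmf.prob (TC R \<epsilon> tb V E r0) {F. separated E F u v} \<le> 5 * real (gdist E u v) / real R" .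
qed

end
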